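(* Let $N_T,N_R\ge 1$ be integers, let $\mathcal{R}>0$ and $\beta>0$, and let $\bar\gamma_k>0$. Define $\xi=[2\pi(2^{2\mathcal{R}}-1)]^{-1/2}$, $\tau=2^{\mathcal{R}}-1$, $\varphi_H=\tau+\frac{1}{2\xi\sqrt\beta}$, $\varphi_L=\tau-\frac{1}{2\xi\sqrt\beta}$, and $$F_{\mathrm{MRC}}(\gamma)=\Big\{1-\exp\!\Big(-\frac{\gamma}{\bar\gamma_k}\Big)\sum_{n=0}^{N_R-1}\frac{1}{n!}\Big(\frac{\gamma}{\bar\gamma_k}\Big)^n\Big\}^{N_T}.$$ Then the quantity $\bar\varepsilon_k^{\mathrm{TAS/MRC}}:=\xi\sqrt\beta\int_{\varphi_L}^{\varphi_H}F_{\mathrm{MRC}}(\gamma)\,d\gamma$ equals $$1+\xi\sqrt\beta\sum_{m=1}^{N_T}\binom{N_T}{m}(-1)^m\sum_{j_1=0}^{N_R-1}\cdots\sum_{j_m=0}^{N_R-1}\Big(\prod_{t=1}^m\frac{1}{j_t!}\Big)m^{-\mathcal{S}-1}\bar\gamma_k\Big\{\Upsilon\Big(\mathcal{S}+1,\frac{m\varphi_H}{\bar\gamma_k}\Big)-\Upsilon\Big(\mathcal{S}+1,\frac{m\varphi_L}{\bar\gamma_k}\Big)\Big\},$$ where $\mathcal{S}=\sum_{t=1}^m j_t$ and $\Upsilon(\alpha,z)=\int_0^z e^{-t}t^{\alpha-1}\,dt$ is the lower incomplete gamma function.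
   Context: $F_{\mathrm{MRC}}$ is the CDF of the per-hop SNR $\max_{1\le i\le N_T}\sum_{j=1}^{N_R}\gamma^{(i,j)}$ of transmit antenna selection with maximum ratio combining, where $\gamma^{(i,j)}$ are i.i.d. exponential with mean $\bar\gamma_k$ (Rayleigh fading). The quantity $\bar\varepsilon_k^{\mathrm{TAS/MRC}}$ is the paper's approximation of the average block error rate at hop $k$ in the finite-blocklength regime with coding rate $\mathcal{R}$ and blocklength $\beta$. *)

theory Defs
  imports "HOL-Analysis.Analysis"
begin

text \<open>The integral is oriented
  (interval Lebesgue integral), so z may be negative.\<close>
definition lower_inc_gamma :: "nat \<Rightarrow> real \<Rightarrow> real" where
  "lower_inc_gamma a z = (LBINT t=0..z. exp (- t) * t ^ (a - 1))"

definition F_MRC :: "nat \<Rightarrow> nat \<Rightarrow> real \<Rightarrow> real \<Rightarrow> real" where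
  "F_MRC NT NR gbar g =
     (1 - exp (- g / gbar) * (\<Sum>n<NR. (1 / fact n) * (g / gbar) ^ n)) ^ NT"

definition xi_par :: "real \<Rightarrow> real" where
  "xi_par R = 1 / sqrt (2 * pi * (2 powr (2 * R) - 1))"

definition tau_par :: "real \<Rightarrow> real" where
  "tau_par R = 2 powr R - 1"

definition phi_H :: "real \<Rightarrow> real \<Rightarrow> real" where
  "phi_H R \<beta> = tau_par R + 1 / (2 * xi_par R * sqrt \<beta>)"

definition phi_L :: "real \<Rightarrow> real \<Rightarrow> real" where
  "phi_L R \<beta> = tau_par R - 1 / (2 * xi_par R * sqrt \<beta>)"

definition avg_BLER :: "nat \<Rightarrow> nat \<Rightarrow> real \<Rightarrow> real \<Rightarrow> real \<Rightarrow> real" where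
  "avg_BLER NT NR R \<beta> gbar =
     xi_par R * sqrt \<beta> * (LBINT g=phi_L R \<beta>..phi_H R \<beta>. F_MRC NT NR gbar g)"

end

theory Submission
  imports Defs
begin

lemma F_expand:
  fixes NT NR :: nat and gbar g :: real
  shows "F_MRC NT NR gbar g = 1 + (\<Sum>m=1..NT. real (NT choose m) * (-1) ^ m *
        (\<Sum>j \<in> {..<m} \<rightarrow>\<^sub>E {..<NR}.
           (\<Prod>t<m. 1 / fact (j t)) * (exp (- (real m * g / gbar)) * (g / gbar) ^ sum j {..<m})))"
proof -
  define E where "E = exp (- g / gbar) * (\<Sum>n<NR. (1 / fact n) * (g / gbar) ^ n)"
  have Em: "(- E) ^ m = (-1) ^ m * (\<Sum>j \<in> {..<m} \<rightarrow>\<^sub>E {..<NR}.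
           (\<Prod>t<m. 1 / fact (j t)) * (exp (- (real m * g / gbar)) * (g / gbar) ^ sum j {..<m}))" for m
  proof -
    have "(\<Sum>n<NR. (1 / fact n) * (g / gbar) ^ n) ^ m = (\<Prod>t<m. \<Sum>n<NR. (1 / fact n) * (g / gbar) ^ n)"
      by simp
    also have "\<dots> = (\<Sum>j \<in> {..<m} \<rightarrow>\<^sub>E {..<NR}. \<Prod>t<m. (1 / fact (j t)) * (g / gbar) ^ (j t))"
      by (rule prod_sum_PiE) auto
    also have "\<dots> = (\<Sum>j \<in> {..<m} \<rightarrow>\<^sub>E {..<NR}. (\<Prod>t<m. 1 / fact (j t)) * (g / gbar) ^ sum j {..<m})"
      by (simp only: prod.distrib power_sum)
    finally have 1: "(\<Sum>n<NR. (1 / fact n) * (g / gbar) ^ n) ^ m = \<dots>" .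
    have 2: "exp (- g / gbar) ^ m = exp (- (real m * g / gbar))"
      by (subst exp_of_nat_mult[symmetric]) simp
    have "(- E) ^ m = (-1) ^ m * (exp (- g / gbar) ^ m * (\<Sum>n<NR. (1 / fact n) * (g / gbar) ^ n) ^ m)"
      by (subst power_minus) (simp only: E_def power_mult_distrib)
    also have "\<dots> = (-1) ^ m * (exp (- (real m * g / gbar)) * (\<Sum>j \<in> {..<m} \<rightarrow>\<^sub>E {..<NR}. (\<Prod>t<m. 1 / fact (j t)) * (g / gbar) ^ sum j {..<m}))"
      by (simp only: 1 2)
    also have "\<dots> = (-1) ^ m * (\<Sum>j \<in> {..<m} \<rightarrow>\<^sub>E {..<NR}.
           (\<Prod>t<m. 1 / fact (j t)) * (exp (- (real m * g / gbar)) * (g / gbar) ^ sum j {..<m}))"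
      by (simp only: sum_distrib_left mult.left_commute)
    finally show ?thesis .
  qed
  have "F_MRC NT NR gbar g = (- E + 1) ^ NT" unfolding F_MRC_def E_def by simp
  also have "\<dots> = (\<Sum>m\<le>NT. of_nat (NT choose m) * (- E) ^ m * 1 ^ (NT - m))"
    by (rule binomial_ring)
  also have "\<dots> = (\<Sum>m\<le>NT. real (NT choose m) * (- E) ^ m)"
    by simp
  also have "\<dots> = 1 + (\<Sum>m=1..NT. real (NT choose m) * (- E) ^ m)"
    by (simp add: sum.atMost_shift atLeast0AtMost[symmetric] sum.atLeast_Suc_atMost)
  finally show ?thesis by (simp only: Em mult.assoc)
qed

lemma lig_deriv:
  "(lower_inc_gamma k has_real_derivative (exp (- z) * z ^ (k - 1))) (at z)"
proof -
  define a where "a = min 0 z - 1"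
  define b where "b = max 0 z + 1"
  have cont: "continuous_on {a..b} (\<lambda>t::real. exp (- t) * t ^ (k - 1))"
    by (intro continuous_intros)
  have "((\<lambda>u. LBINT y=(0::real)..u. exp (- y) * y ^ (k - 1)) has_vector_derivative (exp (- z) * z ^ (k - 1))) (at z within {a..b})"
    by (rule interval_integral_FTC2[OF _ _ cont]) (auto simp: a_def b_def)
  moreover have "at z within {a..b} = at z"
    by (rule at_within_Icc_at) (auto simp: a_def b_def)
  ultimately show ?thesis
    unfolding lower_inc_gamma_def[abs_def] has_real_derivative_iff_has_vector_derivative by (simp add: zero_ereal_def)
qed

lemma lig_deriv_chain[derivative_intros]:
  "(f has_real_derivative f') (at x within s) \<Longrightarrow>
   ((\<lambda>x. lower_inc_gamma k (f x)) has_real_derivative (exp (- f x) * f x ^ (k - 1) * f')) (at x within s)"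
  using DERIV_chain2[OF lig_deriv] by blast

lemma aux_simp:
  fixes m S :: nat and gbar g :: real
  assumes "m \<ge> 1" "gbar > 0"
  shows "real m powr (- real S - 1) * gbar *
     (exp (- (real m * g / gbar)) * (real m * g / gbar) ^ (S + 1 - 1) * (real m / gbar))
   = exp (- (real m * g / gbar)) * (g / gbar) ^ S"
proof -
  have mpos: "real m > 0" using assms by simp
  have "real m powr (- real S - 1) = 1 / real m ^ (S + 1)"
  proof -
    have "real m powr (- real S - 1) = real m powr (- real (S + 1))"
      by (rule arg_cong[where f="\<lambda>e. real m powr e"]) simp
    also have "\<dots> = 1 / real m powr (real (S + 1))" by (simp only: powr_minus_divide)
    also have "\<dots> = 1 / real m ^ (S + 1)" using mpos by (simp only: powr_realpow)
    finally show ?thesis .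
  qed
  then show ?thesis using mpos assms
    by (simp add: power_mult_distrib power_divide field_simps)
qed

theorem mainTheorem1:
  fixes NT NR :: nat and R \<beta> gbar :: real
  assumes "NT \<ge> 1" and "NR \<ge> 1" and "R > 0" and "\<beta> > 0" and "gbar > 0"
  shows "avg_BLER NT NR R \<beta> gbar =
    1 + xi_par R * sqrt \<beta> *
      (\<Sum>m=1..NT. real (NT choose m) * (-1) ^ m *
        (\<Sum>j \<in> {..<m} \<rightarrow>\<^sub>E {..<NR}.
           (\<Prod>t<m. 1 / fact (j t)) *
           real m powr (- real (sum j {..<m}) - 1) * gbar *
           (lower_inc_gamma (sum j {..<m} + 1) (real m * phi_H R \<beta> / gbar)
            - lower_inc_gamma (sum j {..<m} + 1) (real m * phi_L R \<beta> / gbar))))"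
proof -
  define G where "G = (\<lambda>g. \<Sum>m=1..NT. real (NT choose m) * (-1) ^ m *
        (\<Sum>j \<in> {..<m} \<rightarrow>\<^sub>E {..<NR}.
           (\<Prod>t<m. 1 / fact (j t)) *
           real m powr (- real (sum j {..<m}) - 1) * gbar *
           lower_inc_gamma (sum j {..<m} + 1) (real m * g / gbar)))"
  define A where "A = (\<lambda>g. g + G g)"
  have lin: "((\<lambda>g. real m * g / gbar) has_real_derivative real m / gbar) (at x)" for m x
    using assms by (auto intro!: derivative_eq_intros)
  have dG: "(G has_real_derivative (\<Sum>m=1..NT. real (NT choose m) * (-1) ^ m *
        (\<Sum>j \<in> {..<m} \<rightarrow>\<^sub>E {..<NR}.
           (\<Prod>t<m. 1 / fact (j t)) *
           real m powr (- real (sum j {..<m}) - 1) * gbar *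
           (exp (- (real m * x / gbar)) * (real m * x / gbar) ^ (sum j {..<m} + 1 - 1) * (real m / gbar))))) (at x)" for x
    unfolding G_def
    by (intro DERIV_sum DERIV_cmult lig_deriv_chain lin)
  have dA: "(A has_real_derivative F_MRC NT NR gbar x) (at x)" for x
  proof -
    have "(A has_real_derivative 1 + (\<Sum>m=1..NT. real (NT choose m) * (-1) ^ m *
        (\<Sum>j \<in> {..<m} \<rightarrow>\<^sub>E {..<NR}.
           (\<Prod>t<m. 1 / fact (j t)) *
           real m powr (- real (sum j {..<m}) - 1) * gbar *
           (exp (- (real m * x / gbar)) * (real m * x / gbar) ^ (sum j {..<m} + 1 - 1) * (real m / gbar))))) (at x)"
      unfolding A_def by (intro DERIV_add DERIV_ident dG)
    also have "1 + (\<Sum>m=1..NT. real (NT choose m) * (-1) ^ m *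
        (\<Sum>j \<in> {..<m} \<rightarrow>\<^sub>E {..<NR}.
           (\<Prod>t<m. 1 / fact (j t)) *
           real m powr (- real (sum j {..<m}) - 1) * gbar *
           (exp (- (real m * x / gbar)) * (real m * x / gbar) ^ (sum j {..<m} + 1 - 1) * (real m / gbar))))
      = F_MRC NT NR gbar x"
      unfolding F_expand
    proof (intro arg_cong[where f="(+) 1"] sum.cong refl arg_cong[where f="(*) _"])
      fix m j assume m: "m \<in> {1..NT}"
      show "(\<Prod>t<m. 1 / fact (j t)) *
           real m powr (- real (sum j {..<m}) - 1) * gbar *
           (exp (- (real m * x / gbar)) * (real m * x / gbar) ^ (sum j {..<m} + 1 - 1) * (real m / gbar))
         = (\<Prod>t<m. 1 / fact (j t)) * (exp (- (real m * x / gbar)) * (x / gbar) ^ sum j {..<m})"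
        using aux_simp[of m gbar "sum j {..<m}" x] m assms by (simp only: mult.assoc) simp
    qed
    finally show ?thesis .
  qed
  have contF: "continuous_on S (F_MRC NT NR gbar)" for S
    unfolding F_MRC_def[abs_def] using assms by (intro continuous_intros) auto
  have FTC: "(LBINT g=phi_L R \<beta>..phi_H R \<beta>. F_MRC NT NR gbar g) = A (phi_H R \<beta>) - A (phi_L R \<beta>)"
    by (rule interval_integral_FTC_finite[OF contF])
       (use dA in \<open>auto simp: has_real_derivative_iff_has_vector_derivative[symmetric] intro: has_field_derivative_at_within\<close>)
  have xpos: "xi_par R * sqrt \<beta> > 0"
  proof -
    have "2 powr (2 * R) > 1" using assms by simp
    then show ?thesis using assms unfolding xi_par_def by simp
  qed
  have HL: "xi_par R * sqrt \<beta> * (phi_H R \<beta> - phi_L R \<beta>) = 1"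
    proof -
    have "xi_par R \<noteq> 0" "sqrt \<beta> \<noteq> 0" using xpos assms by auto
    then show ?thesis unfolding phi_H_def phi_L_def by (simp add: field_simps)
  qed
  have GHL: "G (phi_H R \<beta>) - G (phi_L R \<beta>) = (\<Sum>m=1..NT. real (NT choose m) * (-1) ^ m *
        (\<Sum>j \<in> {..<m} \<rightarrow>\<^sub>E {..<NR}.
           (\<Prod>t<m. 1 / fact (j t)) *
           real m powr (- real (sum j {..<m}) - 1) * gbar *
           (lower_inc_gamma (sum j {..<m} + 1) (real m * phi_H R \<beta> / gbar)
            - lower_inc_gamma (sum j {..<m} + 1) (real m * phi_L R \<beta> / gbar))))"
    unfolding G_def sum_subtractf[symmetric]
    by (rule sum.cong[OF refl]) (simp add: right_diff_distrib sum_subtractf)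
  show ?thesis
    unfolding avg_BLER_def FTC A_def GHL[symmetric] using HL by (simp add: algebra_simps)
qed

end
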